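(* Let $\mathcal{X}$ be a connected $n$-premaniplex with base flag $x_0$, let $(\mathcal{Y},\eta)$ be an $(n,m)$-voltage operator with $\mathcal{Y}$ connected and base flag $y_0$, let $N=\operatorname{Stab}_{\mathcal{C}^n}(x_0)$, $L=\operatorname{Stab}_{\mathcal{C}^m}(y_0)$, and $\zeta:L\to\mathcal{C}^n$, $\zeta(\omega)=\eta(W_\omega(y_0))$. Suppose $\mathcal{X}\rtimes_\eta\mathcal{Y}$ is connected. Then for $\omega\in\mathcal{C}^m$ there exists an automorphism $\alpha_\omega$ of $\mathcal{X}\rtimes_\eta\mathcal{Y}$ with $(x_0,y_0)\alpha_\omega=\omega(x_0,y_0)$ if and only if $\omega\in\operatorname{N}_{\mathcal{C}^m}(\zeta^{-1}(N))$; moreover $\operatorname{Aut}(\mathcal{X}\rtimes_\eta\mathcal{Y})\cong\operatorname{N}_{\mathcal{C}^m}(\zeta^{-1}(N))/\zeta^{-1}(N)$.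
   Context: An $n$-premaniplex is an edge-coloured graph (semi-edges and parallel edges allowed) with colours $\{0,\dots,n-1\}$ such that every vertex (flag) is the start of exactly one dart of each colour, and for $|i-j|\ge2$ alternating $i,j$-paths of length 4 are closed; $x^i$ is the $i$-adjacent flag of $x$. $\mathcal{C}^n=\langle r_0,\dots,r_{n-1}\mid r_i^2,\ (r_ir_j)^2\ (|i-j|\ge2)\rangle$ acts on the left on flags by $r_ix=x^i$; automorphisms act on the right. $\operatorname{N}_G(H)$ denotes the normaliser. For a flag $y$ of an $m$-premaniplex $\mathcal{Y}$ and $\omega\in\mathcal{C}^m$, $W_\omega(y)$ is the homotopy class of paths from $y$ whose colour sequence $i_1,\dots,i_k$ satisfies $r_{i_k}\cdots r_{i_1}=\omega$; these form the fundamental groupoid $\Pi(\mathcal{Y})$. A voltage assignment $\eta:\Pi(\mathcal{Y})\to\mathcal{C}^n$ satisfies $\eta(W_1W_2)=\eta(W_2)\eta(W_1)$; $(\mathcal{Y},\eta)$ is an $(n,m)$-voltage operator. $\mathcal{X}\rtimes_\eta\mathcal{Y}$ has flags $\mathcal{X}\times\mathcal{Y}$ and $(x,y)^i=(\eta(W_{r_i}(y))x,r_iy)$, $i\in\{0,\dots,m-1\}$; hence $\omega(x,y)=(\eta(W_\omega(y))x,\omega y)$. *)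

theory Defs
  imports "HOL-Algebra.Group_Action"
begin

text \<open>A word [i1,...,ik] represents the element r_i1 r_i2 ... r_ik.\<close>

inductive coxeq :: "nat \<Rightarrow> nat list \<Rightarrow> nat list \<Rightarrow> bool" for n where
  refl: "w \<in> lists {..<n} \<Longrightarrow> coxeq n w w"
| sym: "coxeq n u v \<Longrightarrow> coxeq n v u"
| trans: "coxeq n u v \<Longrightarrow> coxeq n v w \<Longrightarrow> coxeq n u w"
| app: "coxeq n u v \<Longrightarrow> coxeq n u' v' \<Longrightarrow> coxeq n (u @ u') (v @ v')"
| invol: "i < n \<Longrightarrow> coxeq n [i, i] []"
| comm: "i < n \<Longrightarrow> j < n \<Longrightarrow> (i + 2 \<le> j \<or> j + 2 \<le> i) \<Longrightarrow> coxeq n [i, j, i, j] []"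

definition cls :: "nat \<Rightarrow> nat list \<Rightarrow> nat list set" where
  "cls n w = {v. coxeq n w v}"

definition repr :: "nat list set \<Rightarrow> nat list" where
  "repr g = (SOME w. w \<in> g)"

definition Cox :: "nat \<Rightarrow> nat list set monoid" where
  "Cox n = \<lparr>carrier = cls n ` lists {..<n},
            mult = (\<lambda>a b. cls n (repr a @ repr b)),
            one = cls n []\<rparr>"

definition gen :: "nat \<Rightarrow> nat \<Rightarrow> nat list set" where
  "gen n i = cls n [i]"

text \<open>Left action of words: r_i x = adj i x, so [i1,...,ik] acts as r_i1(...(r_ik x)).\<close>
definition act :: "(nat \<Rightarrow> 'a \<Rightarrow> 'a) \<Rightarrow> nat list \<Rightarrow> 'a \<Rightarrow> 'a" where
  "act adj w x = foldr adj w x"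

definition gact :: "(nat \<Rightarrow> 'a \<Rightarrow> 'a) \<Rightarrow> nat list set \<Rightarrow> 'a \<Rightarrow> 'a" where
  "gact adj g x = act adj (repr g) x"

definition premaniplex :: "nat \<Rightarrow> 'a set \<Rightarrow> (nat \<Rightarrow> 'a \<Rightarrow> 'a) \<Rightarrow> bool" where
  "premaniplex n F adj \<longleftrightarrow>
     (\<forall>i<n. \<forall>x\<in>F. adj i x \<in> F \<and> adj i (adj i x) = x) \<and>
     (\<forall>i<n. \<forall>j<n. (i + 2 \<le> j \<or> j + 2 \<le> i) \<longrightarrow>
        (\<forall>x\<in>F. adj i (adj j (adj i (adj j x))) = x))"

definition connected_pm :: "nat \<Rightarrow> 'a set \<Rightarrow> (nat \<Rightarrow> 'a \<Rightarrow> 'a) \<Rightarrow> bool" where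
  "connected_pm n F adj \<longleftrightarrow> (\<forall>x\<in>F. \<forall>y\<in>F. \<exists>w\<in>lists {..<n}. act adj w x = y)"

definition stab :: "nat \<Rightarrow> (nat \<Rightarrow> 'a \<Rightarrow> 'a) \<Rightarrow> 'a \<Rightarrow> nat list set set" where
  "stab n adj x0 = {g \<in> carrier (Cox n). gact adj g x0 = x0}"

text \<open>Automorphism group; automorphisms act on the right: (x)(alpha beta) = ((x)alpha)beta.\<close>
definition Aut :: "nat \<Rightarrow> 'a set \<Rightarrow> (nat \<Rightarrow> 'a \<Rightarrow> 'a) \<Rightarrow> ('a \<Rightarrow> 'a) monoid" where
  "Aut n F adj = \<lparr>carrier = {\<alpha>. bij_betw \<alpha> F F \<and> \<alpha> \<in> extensional F \<and>
                             (\<forall>i<n. \<forall>x\<in>F. \<alpha> (adj i x) = adj i (\<alpha> x))},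
                 mult = (\<lambda>\<alpha> \<beta>. restrict (\<beta> \<circ> \<alpha>) F),
                 one = restrict id F\<rparr>"

text \<open>The fundamental groupoid element W_g(y) is encoded as the pair (y, g), g in C^m;
  it ends at g y and W_g1(y) W_g2(g1 y) = W_(g2 g1)(y).  A voltage assignment eta
  satisfies eta(W1 W2) = eta(W2) eta(W1).\<close>
definition voltage_operator ::
  "nat \<Rightarrow> nat \<Rightarrow> 'b set \<Rightarrow> (nat \<Rightarrow> 'b \<Rightarrow> 'b) \<Rightarrow> ('b \<Rightarrow> nat list set \<Rightarrow> nat list set) \<Rightarrow> bool" where
  "voltage_operator n m Y adjY eta \<longleftrightarrow>
     premaniplex m Y adjY \<and>
     (\<forall>y\<in>Y. \<forall>g\<in>carrier (Cox m). eta y g \<in> carrier (Cox n)) \<and>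
     (\<forall>y\<in>Y. \<forall>g1\<in>carrier (Cox m). \<forall>g2\<in>carrier (Cox m).
        eta y (g2 \<otimes>\<^bsub>Cox m\<^esub> g1) = eta (gact adjY g1 y) g2 \<otimes>\<^bsub>Cox n\<^esub> eta y g1)"

definition mix_adj ::
  "(nat \<Rightarrow> 'a \<Rightarrow> 'a) \<Rightarrow> nat \<Rightarrow> ('b \<Rightarrow> nat list set \<Rightarrow> nat list set) \<Rightarrow> (nat \<Rightarrow> 'b \<Rightarrow> 'b)
    \<Rightarrow> nat \<Rightarrow> 'a \<times> 'b \<Rightarrow> 'a \<times> 'b" where
  "mix_adj adjX m eta adjY i p = (gact adjX (eta (snd p) (gen m i)) (fst p), adjY i (snd p))"

definition zeta_preimage ::
  "nat \<Rightarrow> nat \<Rightarrow> (nat \<Rightarrow> 'a \<Rightarrow> 'a) \<Rightarrow> 'a \<Rightarrow> (nat \<Rightarrow> 'b \<Rightarrow> 'b) \<Rightarrow> 'b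
    \<Rightarrow> ('b \<Rightarrow> nat list set \<Rightarrow> nat list set) \<Rightarrow> nat list set set" where
  "zeta_preimage n m adjX x0 adjY y0 eta = {g \<in> stab m adjY y0. eta y0 g \<in> stab n adjX x0}"

end

theory Submission
  imports Defs "HOL-Algebra.Zassenhaus"
begin


lemma coxeq_lists: "coxeq n u v \<Longrightarrow> u \<in> lists {..<n} \<and> v \<in> lists {..<n}"
  by (induction rule: coxeq.induct) auto

lemma coxeq_refl': "u \<in> lists {..<n} \<Longrightarrow> coxeq n u u"
  by (rule coxeq.refl)

lemma cls_eq_iff: "u \<in> lists {..<n} \<Longrightarrow> cls n u = cls n v \<longleftrightarrow> coxeq n u v"
proof
  assume u: "u \<in> lists {..<n}" and e: "cls n u = cls n v"
  have "u \<in> cls n u" using u by (simp add: cls_def coxeq.refl)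
  then have "u \<in> cls n v" using e by simp
  then have "coxeq n v u" by (simp add: cls_def)
  then show "coxeq n u v" by (rule coxeq.sym)
next
  assume "coxeq n u v"
  then show "cls n u = cls n v" unfolding cls_def
    by (auto intro: coxeq.trans coxeq.sym)
qed

lemma cls_eqI: "coxeq n u v \<Longrightarrow> cls n u = cls n v"
  unfolding cls_def by (auto intro: coxeq.trans coxeq.sym)

lemma repr_cls: "u \<in> lists {..<n} \<Longrightarrow> coxeq n u (repr (cls n u))"
proof -
  assume u: "u \<in> lists {..<n}"
  have "u \<in> cls n u" using u by (simp add: cls_def coxeq.refl)
  then have "repr (cls n u) \<in> cls n u" unfolding repr_def by (rule someI)
  then show ?thesis by (simp add: cls_def)
qed

lemma cls_repr: "u \<in> lists {..<n} \<Longrightarrow> cls n (repr (cls n u)) = cls n u"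
  using repr_cls cls_eqI by metis

lemma repr_lists: "u \<in> lists {..<n} \<Longrightarrow> repr (cls n u) \<in> lists {..<n}"
  using repr_cls coxeq_lists by blast

lemma carrier_Cox: "carrier (Cox n) = cls n ` lists {..<n}"
  by (simp add: Cox_def)

lemma repr_in_carrier:
  assumes "g \<in> carrier (Cox n)"
  shows "repr g \<in> lists {..<n}" "cls n (repr g) = g"
proof -
  obtain u where u: "u \<in> lists {..<n}" "g = cls n u" using assms by (auto simp: carrier_Cox)
  then show "repr g \<in> lists {..<n}" "cls n (repr g) = g"
    using repr_lists cls_repr by auto
qed

lemma mult_cls: "u \<in> lists {..<n} \<Longrightarrow> v \<in> lists {..<n} \<Longrightarrow>
   cls n u \<otimes>\<^bsub>Cox n\<^esub> cls n v = cls n (u @ v)"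
  unfolding Cox_def apply simp
  apply (rule cls_eqI)
  apply (rule coxeq.app)
  using repr_cls coxeq.sym by blast+

lemma one_Cox: "\<one>\<^bsub>Cox n\<^esub> = cls n []"
  by (simp add: Cox_def)

lemma cls_in_carrier: "u \<in> lists {..<n} \<Longrightarrow> cls n u \<in> carrier (Cox n)"
  by (simp add: carrier_Cox)

lemma coxeq_rev_app: "u \<in> lists {..<n} \<Longrightarrow> coxeq n (rev u @ u) []"
proof (induction u)
  case Nil
  then show ?case by (simp add: coxeq.refl)
next
  case (Cons i u)
  have u: "u \<in> lists {..<n}" and i: "i < n" using Cons.prems by auto
  have ru: "rev u \<in> lists {..<n}" using u by auto
  have "coxeq n ([i, i] @ u) ([] @ u)"
    by (rule coxeq.app[OF coxeq.invol[OF i] coxeq.refl[OF u]])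
  then have "coxeq n (rev u @ ([i, i] @ u)) (rev u @ ([] @ u))"
    by (rule coxeq.app[OF coxeq.refl[OF ru]])
  then have "coxeq n (rev (i # u) @ (i # u)) (rev u @ u)" by simp
  then show ?case using Cons.IH u coxeq.trans by blast
qed

lemma group_Cox: "group (Cox n)"
proof (rule groupI)
  fix x y assume "x \<in> carrier (Cox n)" "y \<in> carrier (Cox n)"
  then obtain u v where "u \<in> lists {..<n}" "v \<in> lists {..<n}" "x = cls n u" "y = cls n v"
    by (auto simp: carrier_Cox)
  then show "x \<otimes>\<^bsub>Cox n\<^esub> y \<in> carrier (Cox n)"
    by (simp add: mult_cls cls_in_carrier)
next
  show "\<one>\<^bsub>Cox n\<^esub> \<in> carrier (Cox n)" by (auto simp: carrier_Cox one_Cox)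
next
  fix x y z assume "x \<in> carrier (Cox n)" "y \<in> carrier (Cox n)" "z \<in> carrier (Cox n)"
  then obtain u v w where "u \<in> lists {..<n}" "v \<in> lists {..<n}" "w \<in> lists {..<n}"
     "x = cls n u" "y = cls n v" "z = cls n w"
    by (auto simp: carrier_Cox)
  then show "x \<otimes>\<^bsub>Cox n\<^esub> y \<otimes>\<^bsub>Cox n\<^esub> z = x \<otimes>\<^bsub>Cox n\<^esub> (y \<otimes>\<^bsub>Cox n\<^esub> z)"
    by (simp add: mult_cls)
next
  fix x assume "x \<in> carrier (Cox n)"
  then obtain u where "u \<in> lists {..<n}" "x = cls n u" by (auto simp: carrier_Cox)
  then show "\<one>\<^bsub>Cox n\<^esub> \<otimes>\<^bsub>Cox n\<^esub> x = x"
    by (simp add: mult_cls one_Cox)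
next
  fix x assume "x \<in> carrier (Cox n)"
  then obtain u where u: "u \<in> lists {..<n}" "x = cls n u" by (auto simp: carrier_Cox)
  have "rev u \<in> lists {..<n}" using u by auto
  then have "cls n (rev u) \<in> carrier (Cox n)" by (rule cls_in_carrier)
  moreover have "cls n (rev u) \<otimes>\<^bsub>Cox n\<^esub> x = \<one>\<^bsub>Cox n\<^esub>"
    using u \<open>rev u \<in> lists {..<n}\<close> by (simp add: mult_cls one_Cox cls_eqI coxeq_rev_app)
  ultimately show "\<exists>y\<in>carrier (Cox n). y \<otimes>\<^bsub>Cox n\<^esub> x = \<one>\<^bsub>Cox n\<^esub>" by blast
qed



lemma act_Nil[simp]: "act adj [] x = x" by (simp add: act_def)
lemma act_Cons[simp]: "act adj (i # w) x = adj i (act adj w x)" by (simp add: act_def)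
lemma act_append: "act adj (u @ v) x = act adj u (act adj v x)" by (simp add: act_def)

locale pmx =
  fixes n :: nat and F :: "'a set" and adj :: "nat \<Rightarrow> 'a \<Rightarrow> 'a"
  assumes pm: "premaniplex n F adj"
begin

lemma adj_closed: "i < n \<Longrightarrow> x \<in> F \<Longrightarrow> adj i x \<in> F"
  using pm by (simp add: premaniplex_def)

lemma adj_adj: "i < n \<Longrightarrow> x \<in> F \<Longrightarrow> adj i (adj i x) = x"
  using pm by (simp add: premaniplex_def)

lemma adj_comm: "i < n \<Longrightarrow> j < n \<Longrightarrow> (i + 2 \<le> j \<or> j + 2 \<le> i) \<Longrightarrow> x \<in> F \<Longrightarrow>
   adj i (adj j (adj i (adj j x))) = x"
  using pm unfolding premaniplex_def by blast

lemma act_closed: "w \<in> lists {..<n} \<Longrightarrow> x \<in> F \<Longrightarrow> act adj w x \<in> F"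
  by (induction w) (auto simp: adj_closed)

lemma act_coxeq: "coxeq n u v \<Longrightarrow> x \<in> F \<Longrightarrow> act adj u x = act adj v x"
proof (induction arbitrary: x rule: coxeq.induct)
  case (refl w) then show ?case by simp
next
  case (sym u v) then show ?case by simp
next
  case (trans u v w) then show ?case by simp
next
  case (app u v u' v')
  have v': "v' \<in> lists {..<n}" using app.hyps(2) coxeq_lists by blast
  have m: "act adj v' x \<in> F" using act_closed[OF v' app.prems] .
  have e1: "act adj u' x = act adj v' x" by (rule app.IH(2)[OF app.prems])
  have e2: "act adj u (act adj v' x) = act adj v (act adj v' x)" by (rule app.IH(1)[OF m])
  show ?case using e1 e2 by (simp add: act_append)
next
  case (invol i) then show ?case by (simp add: adj_adj)
next
  case (comm i j) then show ?case by (simp add: adj_comm)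
qed

lemma gact_cls: "u \<in> lists {..<n} \<Longrightarrow> x \<in> F \<Longrightarrow> gact adj (cls n u) x = act adj u x"
  unfolding gact_def using act_coxeq[OF repr_cls] by simp

lemma gact_closed: "g \<in> carrier (Cox n) \<Longrightarrow> x \<in> F \<Longrightarrow> gact adj g x \<in> F"
  unfolding gact_def by (rule act_closed[OF repr_in_carrier(1)])

lemma gact_mult: "g \<in> carrier (Cox n) \<Longrightarrow> h \<in> carrier (Cox n) \<Longrightarrow> x \<in> F \<Longrightarrow>
   gact adj (g \<otimes>\<^bsub>Cox n\<^esub> h) x = gact adj g (gact adj h x)"
proof -
  assume g: "g \<in> carrier (Cox n)" and h: "h \<in> carrier (Cox n)" and x: "x \<in> F"
  obtain u v where u: "u \<in> lists {..<n}" "g = cls n u" and v: "v \<in> lists {..<n}" "h = cls n v"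
    using g h by (auto simp: carrier_Cox)
  have "act adj v x \<in> F" using v x act_closed by blast
  then show ?thesis using u v x by (simp add: mult_cls gact_cls act_append)
qed

lemma gact_one: "x \<in> F \<Longrightarrow> gact adj \<one>\<^bsub>Cox n\<^esub> x = x"
  by (simp add: one_Cox gact_cls)

lemma gact_gen: "i < n \<Longrightarrow> x \<in> F \<Longrightarrow> gact adj (gen n i) x = adj i x"
  by (simp add: gen_def gact_cls)

lemma gen_carrier: "i < n \<Longrightarrow> gen n i \<in> carrier (Cox n)"
  by (simp add: gen_def cls_in_carrier)

lemma gact_inv: "g \<in> carrier (Cox n) \<Longrightarrow> x \<in> F \<Longrightarrow> y = gact adj g x \<Longrightarrow>
    gact adj (inv\<^bsub>Cox n\<^esub> g) y = x"
proof -
  assume g: "g \<in> carrier (Cox n)" and x: "x \<in> F" and y: "y = gact adj g x"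
  interpret G: group "Cox n" by (rule group_Cox)
  have "gact adj (inv\<^bsub>Cox n\<^esub> g \<otimes>\<^bsub>Cox n\<^esub> g) x = gact adj (inv\<^bsub>Cox n\<^esub> g) (gact adj g x)"
    using g x by (intro gact_mult) auto
  then have "gact adj (inv\<^bsub>Cox n\<^esub> g) y = gact adj (inv\<^bsub>Cox n\<^esub> g \<otimes>\<^bsub>Cox n\<^esub> g) x"
    using y by simp
  also have "\<dots> = x" using g x by (simp add: gact_one)
  finally show ?thesis .
qed

lemma Aut_act: "\<alpha> \<in> carrier (Aut n F adj) \<Longrightarrow> w \<in> lists {..<n} \<Longrightarrow> x \<in> F \<Longrightarrow>
    \<alpha> (act adj w x) = act adj w (\<alpha> x)"
proof (induction w)
  case Nil then show ?case by simp
next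
  case (Cons i w)
  have w: "w \<in> lists {..<n}" and i: "i < n" using Cons.prems by auto
  have "act adj w x \<in> F" using w Cons.prems(3) act_closed by blast
  moreover have "\<forall>i<n. \<forall>x\<in>F. \<alpha> (adj i x) = adj i (\<alpha> x)" using Cons.prems(1) by (simp add: Aut_def)
  ultimately show ?case using Cons.IH[OF Cons.prems(1) w Cons.prems(3)] i by simp
qed

lemma Aut_gact: "\<alpha> \<in> carrier (Aut n F adj) \<Longrightarrow> g \<in> carrier (Cox n) \<Longrightarrow> x \<in> F \<Longrightarrow>
    \<alpha> (gact adj g x) = gact adj g (\<alpha> x)"
  unfolding gact_def by (rule Aut_act[OF _ repr_in_carrier(1)])

lemma Aut_closed: "\<alpha> \<in> carrier (Aut n F adj) \<Longrightarrow> x \<in> F \<Longrightarrow> \<alpha> x \<in> F"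
  unfolding Aut_def by (auto intro: bij_betw_apply)

lemma Aut_inj: "\<alpha> \<in> carrier (Aut n F adj) \<Longrightarrow> x \<in> F \<Longrightarrow> y \<in> F \<Longrightarrow> \<alpha> x = \<alpha> y \<Longrightarrow> x = y"
  unfolding Aut_def by (auto dest: bij_betw_imp_inj_on inj_onD)

lemma AutI: "bij_betw a F F \<Longrightarrow> a \<in> extensional F \<Longrightarrow>
   (\<And>i x. i < n \<Longrightarrow> x \<in> F \<Longrightarrow> a (adj i x) = adj i (a x)) \<Longrightarrow> a \<in> carrier (Aut n F adj)"
  by (simp add: Aut_def)

lemma AutD: "a \<in> carrier (Aut n F adj) \<Longrightarrow> bij_betw a F F"
   "a \<in> carrier (Aut n F adj) \<Longrightarrow> a \<in> extensional F"
   "a \<in> carrier (Aut n F adj) \<Longrightarrow> i < n \<Longrightarrow> x \<in> F \<Longrightarrow> a (adj i x) = adj i (a x)"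
  by (auto simp: Aut_def)

lemma Aut_mult: "a \<otimes>\<^bsub>Aut n F adj\<^esub> b = restrict (b \<circ> a) F"
  by (simp add: Aut_def)

lemma Aut_one: "\<one>\<^bsub>Aut n F adj\<^esub> = restrict id F"
  by (simp add: Aut_def)

lemma group_Aut: "group (Aut n F adj)"
proof (rule groupI)
  fix a b assume a: "a \<in> carrier (Aut n F adj)" and b: "b \<in> carrier (Aut n F adj)"
  have "bij_betw (b \<circ> a) F F" using AutD(1)[OF a] AutD(1)[OF b] by (rule bij_betw_trans)
  then have "bij_betw (restrict (b \<circ> a) F) F F"
    by (rule bij_betw_cong[THEN iffD2, rotated]) simp
  moreover have "restrict (b \<circ> a) F (adj i x) = adj i (restrict (b \<circ> a) F x)" if "i < n" "x \<in> F" for i x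
    using that AutD(3)[OF a] AutD(3)[OF b] adj_closed Aut_closed[OF a] by simp
  ultimately show "a \<otimes>\<^bsub>Aut n F adj\<^esub> b \<in> carrier (Aut n F adj)"
    by (simp add: Aut_mult AutI)
next
  show "\<one>\<^bsub>Aut n F adj\<^esub> \<in> carrier (Aut n F adj)"
  proof -
    have "bij_betw (restrict id F) F F"
      by (rule bij_betw_cong[THEN iffD2, OF _ bij_betw_id]) simp
    then show ?thesis unfolding Aut_one by (rule AutI) (simp_all add: adj_closed)
  qed
next
  fix a b c assume a: "a \<in> carrier (Aut n F adj)" and b: "b \<in> carrier (Aut n F adj)"
    and c: "c \<in> carrier (Aut n F adj)"
  show "a \<otimes>\<^bsub>Aut n F adj\<^esub> b \<otimes>\<^bsub>Aut n F adj\<^esub> c = a \<otimes>\<^bsub>Aut n F adj\<^esub> (b \<otimes>\<^bsub>Aut n F adj\<^esub> c)"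
    unfolding Aut_mult
  proof (rule ext)
    fix x show "restrict (c \<circ> restrict (b \<circ> a) F) F x = restrict (restrict (c \<circ> b) F \<circ> a) F x"
      using Aut_closed[OF a, of x] by (cases "x \<in> F") simp_all
  qed
next
  fix a assume a: "a \<in> carrier (Aut n F adj)"
  show "\<one>\<^bsub>Aut n F adj\<^esub> \<otimes>\<^bsub>Aut n F adj\<^esub> a = a"
    unfolding Aut_mult Aut_one
  proof (rule ext)
    fix x show "restrict (a \<circ> restrict id F) F x = a x"
      using AutD(2)[OF a] by (cases "x \<in> F") (simp_all add: extensional_def)
  qed
next
  fix a assume a: "a \<in> carrier (Aut n F adj)"
  have bij: "bij_betw a F F" using AutD(1)[OF a] .
  define y where "y = restrict (inv_into F a) F"
  have "bij_betw (inv_into F a) F F" using bij by (rule bij_betw_inv_into)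
  then have "bij_betw y F F"
    unfolding y_def by (rule bij_betw_cong[THEN iffD2, rotated]) simp
  moreover have "y (adj i x) = adj i (y x)" if i: "i < n" and x: "x \<in> F" for i x
  proof -
    define z where "z = inv_into F a x"
    have zF: "z \<in> F" using bij x by (simp add: z_def bij_betw_def inv_into_into)
    have az: "a z = x" using bij x by (simp add: z_def bij_betw_def f_inv_into_f)
    have "a (adj i z) = adj i x" using AutD(3)[OF a i zF] az by simp
    then have "inv_into F a (adj i x) = adj i z"
      using bij adj_closed[OF i zF] by (metis bij_betw_def inv_into_f_f)
    then show ?thesis using x adj_closed[OF i x] by (simp add: y_def z_def)
  qed
  ultimately have yA: "y \<in> carrier (Aut n F adj)" by (intro AutI) (auto simp: y_def)
  have "y \<otimes>\<^bsub>Aut n F adj\<^esub> a = \<one>\<^bsub>Aut n F adj\<^esub>"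
    unfolding Aut_mult Aut_one
  proof (rule ext)
    fix x show "restrict (a \<circ> y) F x = restrict id F x"
      using bij by (cases "x \<in> F") (simp_all add: y_def bij_betw_def f_inv_into_f)
  qed
  then show "\<exists>y\<in>carrier (Aut n F adj). y \<otimes>\<^bsub>Aut n F adj\<^esub> a = \<one>\<^bsub>Aut n F adj\<^esub>"
    using yA by blast
qed

end


lemma (in group) conj_back: "g \<in> carrier G \<Longrightarrow> w \<in> carrier G \<Longrightarrow>
  g = w \<otimes> (inv w \<otimes> g \<otimes> w) \<otimes> inv w"
proof -
  assume a: "g \<in> carrier G" "w \<in> carrier G"
  have "w \<otimes> (inv w \<otimes> g \<otimes> w) \<otimes> inv w = w \<otimes> (inv w \<otimes> g)"
    using a by (simp add: m_assoc)
  also have "\<dots> = g" using a by (simp add: m_assoc[symmetric])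
  finally show ?thesis by (rule HOL.sym)
qed

locale cpmx = pmx +
  fixes b
  assumes conn: "connected_pm n F adj" and bF: "b \<in> F"
begin

abbreviation G where "G \<equiv> Cox n"
abbreviation S where "S \<equiv> stab n adj b"
definition stab' where "stab' p = {g \<in> carrier G. gact adj g p = p}"

lemma S_stab': "S = stab' b" by (simp add: stab_def stab'_def)

lemma orbit: "p \<in> F \<Longrightarrow> \<exists>g\<in>carrier G. gact adj g b = p"
proof -
  assume p: "p \<in> F"
  obtain w where w: "w \<in> lists {..<n}" "act adj w b = p" using conn bF p unfolding connected_pm_def by blast
  then show ?thesis using gact_cls[OF w(1) bF] cls_in_carrier[OF w(1)] by auto
qed

lemma gG: "group G" by (rule group_Cox)

lemma gact_inv2: "g \<in> carrier G \<Longrightarrow> q \<in> F \<Longrightarrow> gact adj g (gact adj (inv\<^bsub>G\<^esub> g) q) = q"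
proof -
  assume g: "g \<in> carrier G" and q: "q \<in> F"
  interpret group G by (rule gG)
  have "gact adj (g \<otimes>\<^bsub>G\<^esub> inv\<^bsub>G\<^esub> g) q = gact adj g (gact adj (inv\<^bsub>G\<^esub> g) q)"
    using g q by (intro gact_mult) auto
  then show ?thesis using g q by (simp add: gact_one)
qed

lemma gact_inv1: "g \<in> carrier G \<Longrightarrow> q \<in> F \<Longrightarrow> gact adj (inv\<^bsub>G\<^esub> g) (gact adj g q) = q"
  using gact_inv by blast

lemma S_sub: "S \<subseteq> carrier G" by (auto simp: stab_def)

lemma subgroup_S: "subgroup S G"
proof -
  interpret group G by (rule gG)
  show ?thesis
  proof (rule subgroupI)
    show "S \<subseteq> carrier G" by (rule S_sub)
    show "S \<noteq> {}" using bF by (auto simp: stab_def gact_one)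
  next
    fix a assume "a \<in> S"
    then have a: "a \<in> carrier G" "gact adj a b = b" by (auto simp: stab_def)
    then have "gact adj (inv\<^bsub>G\<^esub> a) b = b" using gact_inv1[OF a(1) bF] by simp
    then show "inv\<^bsub>G\<^esub> a \<in> S" using a by (simp add: stab_def)
  next
    fix a c assume "a \<in> S" "c \<in> S"
    then show "a \<otimes>\<^bsub>G\<^esub> c \<in> S" using bF by (auto simp: stab_def gact_mult)
  qed
qed

lemma conj_eq: assumes w: "\<omega> \<in> carrier G"
  shows "\<omega> <#\<^bsub>G\<^esub> S #>\<^bsub>G\<^esub> inv\<^bsub>G\<^esub> \<omega> = stab' (gact adj \<omega> b)"
proof -
  interpret group G by (rule gG)
  have wb: "gact adj \<omega> b \<in> F" using gact_closed[OF w bF] .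
  have c1: "g \<in> \<omega> <#\<^bsub>G\<^esub> S #>\<^bsub>G\<^esub> inv\<^bsub>G\<^esub> \<omega> \<longleftrightarrow> (\<exists>s\<in>S. g = \<omega> \<otimes>\<^bsub>G\<^esub> s \<otimes>\<^bsub>G\<^esub> inv\<^bsub>G\<^esub> \<omega>)" for g
    unfolding l_coset_def r_coset_def by auto
  have c2: "(\<exists>s\<in>S. g = \<omega> \<otimes>\<^bsub>G\<^esub> s \<otimes>\<^bsub>G\<^esub> inv\<^bsub>G\<^esub> \<omega>) \<longleftrightarrow> g \<in> stab' (gact adj \<omega> b)" for g
  proof
    assume "\<exists>s\<in>S. g = \<omega> \<otimes>\<^bsub>G\<^esub> s \<otimes>\<^bsub>G\<^esub> inv\<^bsub>G\<^esub> \<omega>"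
    then obtain s where s: "s \<in> S" "g = \<omega> \<otimes>\<^bsub>G\<^esub> s \<otimes>\<^bsub>G\<^esub> inv\<^bsub>G\<^esub> \<omega>" by blast
    have sc: "s \<in> carrier G" "gact adj s b = b" using s(1) by (auto simp: stab_def)
    have "gact adj g (gact adj \<omega> b) = gact adj \<omega> (gact adj s (gact adj (inv\<^bsub>G\<^esub> \<omega>) (gact adj \<omega> b)))"
    proof -
      have ic: "inv\<^bsub>G\<^esub> \<omega> \<in> carrier G" using w by simp
      have ws: "\<omega> \<otimes>\<^bsub>G\<^esub> s \<in> carrier G" using w sc by simp
      have "gact adj g (gact adj \<omega> b) = gact adj (\<omega> \<otimes>\<^bsub>G\<^esub> s) (gact adj (inv\<^bsub>G\<^esub> \<omega>) (gact adj \<omega> b))"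
        unfolding s(2) by (rule gact_mult[OF ws ic wb])
      also have "\<dots> = gact adj \<omega> (gact adj s (gact adj (inv\<^bsub>G\<^esub> \<omega>) (gact adj \<omega> b)))"
        by (rule gact_mult[OF w sc(1) gact_closed[OF ic wb]])
      finally show ?thesis .
    qed
    also have "\<dots> = gact adj \<omega> b" using gact_inv1[OF w bF] sc by simp
    finally show "g \<in> stab' (gact adj \<omega> b)" using s(2) sc w by (simp add: stab'_def)
  next
    assume g: "g \<in> stab' (gact adj \<omega> b)"
    then have gc: "g \<in> carrier G" and gf: "gact adj g (gact adj \<omega> b) = gact adj \<omega> b"
      by (auto simp: stab'_def)
    define s where "s = inv\<^bsub>G\<^esub> \<omega> \<otimes>\<^bsub>G\<^esub> g \<otimes>\<^bsub>G\<^esub> \<omega>"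
    have sc: "s \<in> carrier G" using gc w by (simp add: s_def)
    have "gact adj s b = gact adj (inv\<^bsub>G\<^esub> \<omega>) (gact adj g (gact adj \<omega> b))"
    proof -
      have ic: "inv\<^bsub>G\<^esub> \<omega> \<in> carrier G" using w by simp
      have ig: "inv\<^bsub>G\<^esub> \<omega> \<otimes>\<^bsub>G\<^esub> g \<in> carrier G" using w gc by simp
      have "gact adj s b = gact adj (inv\<^bsub>G\<^esub> \<omega> \<otimes>\<^bsub>G\<^esub> g) (gact adj \<omega> b)"
        unfolding s_def by (rule gact_mult[OF ig w bF])
      also have "\<dots> = gact adj (inv\<^bsub>G\<^esub> \<omega>) (gact adj g (gact adj \<omega> b))"
        by (rule gact_mult[OF ic gc wb])
      finally show ?thesis .
    qed
    also have "\<dots> = b" using gf gact_inv1[OF w bF] by simp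
    finally have "s \<in> S" using sc by (simp add: stab_def)
    moreover have "g = \<omega> \<otimes>\<^bsub>G\<^esub> s \<otimes>\<^bsub>G\<^esub> inv\<^bsub>G\<^esub> \<omega>"
      unfolding s_def by (rule group.conj_back[OF gG gc w])
    ultimately show "\<exists>s\<in>S. g = \<omega> \<otimes>\<^bsub>G\<^esub> s \<otimes>\<^bsub>G\<^esub> inv\<^bsub>G\<^esub> \<omega>" by blast
  qed
  show ?thesis unfolding set_eq_iff using c1 c2 by simp
qed

lemma normalizer_iff: "\<omega> \<in> normalizer G S \<longleftrightarrow> \<omega> \<in> carrier G \<and> stab' (gact adj \<omega> b) = S"
proof -
  have "\<omega> \<in> normalizer G S \<longleftrightarrow> \<omega> \<in> carrier G \<and> \<omega> <#\<^bsub>G\<^esub> S #>\<^bsub>G\<^esub> inv\<^bsub>G\<^esub> \<omega> = S"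
    unfolding normalizer_def stabilizer_def using S_sub by simp
  then show ?thesis using conj_eq by metis
qed

definition alpha where
  "alpha \<omega> = restrict (\<lambda>p. gact adj (SOME g. g \<in> carrier G \<and> gact adj g b = p) (gact adj \<omega> b)) F"

lemma alpha_eval:
  assumes w: "\<omega> \<in> carrier G" and st: "stab' (gact adj \<omega> b) = S" and g: "g \<in> carrier G"
  shows "alpha \<omega> (gact adj g b) = gact adj g (gact adj \<omega> b)"
proof -
  interpret group G by (rule gG)
  define p where "p = gact adj g b"
  have pF: "p \<in> F" unfolding p_def using gact_closed[OF g bF] .
  define h where "h = (SOME g. g \<in> carrier G \<and> gact adj g b = p)"
  have "\<exists>g. g \<in> carrier G \<and> gact adj g b = p" using g p_def by blast
  then have h: "h \<in> carrier G" "gact adj h b = p" unfolding h_def by (metis (mono_tags, lifting) someI_ex)+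
  have ic: "inv\<^bsub>G\<^esub> g \<in> carrier G" using g by simp
  have k: "inv\<^bsub>G\<^esub> g \<otimes>\<^bsub>G\<^esub> h \<in> carrier G" using g h by simp
  have wb: "gact adj \<omega> b \<in> F" using gact_closed[OF w bF] .
  have "gact adj (inv\<^bsub>G\<^esub> g \<otimes>\<^bsub>G\<^esub> h) b = gact adj (inv\<^bsub>G\<^esub> g) (gact adj h b)"
    by (rule gact_mult[OF ic h(1) bF])
  also have "\<dots> = b" using h(2) p_def gact_inv1[OF g bF] by simp
  finally have "inv\<^bsub>G\<^esub> g \<otimes>\<^bsub>G\<^esub> h \<in> S" using k by (simp add: stab_def)
  then have "inv\<^bsub>G\<^esub> g \<otimes>\<^bsub>G\<^esub> h \<in> stab' (gact adj \<omega> b)" using st by simp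
  then have "gact adj (inv\<^bsub>G\<^esub> g \<otimes>\<^bsub>G\<^esub> h) (gact adj \<omega> b) = gact adj \<omega> b" by (simp add: stab'_def)
  moreover have "gact adj (inv\<^bsub>G\<^esub> g \<otimes>\<^bsub>G\<^esub> h) (gact adj \<omega> b) = gact adj (inv\<^bsub>G\<^esub> g) (gact adj h (gact adj \<omega> b))"
    by (rule gact_mult[OF ic h(1) wb])
  ultimately have e: "gact adj (inv\<^bsub>G\<^esub> g) (gact adj h (gact adj \<omega> b)) = gact adj \<omega> b" by simp
  have "gact adj h (gact adj \<omega> b) = gact adj g (gact adj (inv\<^bsub>G\<^esub> g) (gact adj h (gact adj \<omega> b)))"
    using gact_inv2[OF g gact_closed[OF h(1) wb]] by simp
  also have "\<dots> = gact adj g (gact adj \<omega> b)" using e by simp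
  finally have "gact adj h (gact adj \<omega> b) = gact adj g (gact adj \<omega> b)" .
  moreover have "alpha \<omega> p = gact adj h (gact adj \<omega> b)" using pF by (simp add: alpha_def h_def)
  ultimately show ?thesis by (simp add: p_def)
qed

lemma alpha_Aut:
  assumes w: "\<omega> \<in> carrier G" and st: "stab' (gact adj \<omega> b) = S"
  shows "alpha \<omega> \<in> carrier (Aut n F adj)"
proof (rule AutI)
  interpret group G by (rule gG)
  have wb: "gact adj \<omega> b \<in> F" using gact_closed[OF w bF] .
  show "alpha \<omega> \<in> extensional F" by (simp add: alpha_def)
next
  interpret group G by (rule gG)
  have wb: "gact adj \<omega> b \<in> F" using gact_closed[OF w bF] .
  fix i x assume i: "i < n" and x: "x \<in> F"
  obtain g where g: "g \<in> carrier G" "gact adj g b = x" using orbit[OF x] by blast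
  have gi: "gen n i \<in> carrier G" using gen_carrier[OF i] .
  have "adj i x = gact adj (gen n i \<otimes>\<^bsub>G\<^esub> g) b"
    using gact_mult[OF gi g(1) bF] gact_gen[OF i x] g(2) by simp
  then have "alpha \<omega> (adj i x) = gact adj (gen n i \<otimes>\<^bsub>G\<^esub> g) (gact adj \<omega> b)"
    using alpha_eval[OF w st] gi g(1) by simp
  also have "\<dots> = adj i (gact adj g (gact adj \<omega> b))"
    using gact_mult[OF gi g(1) wb] gact_gen[OF i gact_closed[OF g(1) wb]] by simp
  also have "\<dots> = adj i (alpha \<omega> x)" using alpha_eval[OF w st g(1)] g(2) by simp
  finally show "alpha \<omega> (adj i x) = adj i (alpha \<omega> x)" .
next
  interpret group G by (rule gG)
  have wb: "gact adj \<omega> b \<in> F" using gact_closed[OF w bF] .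
  have inj: "inj_on (alpha \<omega>) F"
  proof (rule inj_onI)
    fix x y assume x: "x \<in> F" and y: "y \<in> F" and e: "alpha \<omega> x = alpha \<omega> y"
    obtain g where g: "g \<in> carrier G" "gact adj g b = x" using orbit[OF x] by blast
    obtain h where h: "h \<in> carrier G" "gact adj h b = y" using orbit[OF y] by blast
    have ih: "inv\<^bsub>G\<^esub> h \<in> carrier G" using h by simp
    have k: "inv\<^bsub>G\<^esub> h \<otimes>\<^bsub>G\<^esub> g \<in> carrier G" using g h by simp
    have e2: "gact adj g (gact adj \<omega> b) = gact adj h (gact adj \<omega> b)"
      using e alpha_eval[OF w st g(1)] alpha_eval[OF w st h(1)] g(2) h(2) by simp
    have "gact adj (inv\<^bsub>G\<^esub> h \<otimes>\<^bsub>G\<^esub> g) (gact adj \<omega> b) = gact adj (inv\<^bsub>G\<^esub> h) (gact adj g (gact adj \<omega> b))"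
      by (rule gact_mult[OF ih g(1) wb])
    also have "\<dots> = gact adj \<omega> b" using e2 gact_inv1[OF h(1) wb] by simp
    finally have "inv\<^bsub>G\<^esub> h \<otimes>\<^bsub>G\<^esub> g \<in> stab' (gact adj \<omega> b)" using k by (simp add: stab'_def)
    then have "inv\<^bsub>G\<^esub> h \<otimes>\<^bsub>G\<^esub> g \<in> S" using st by simp
    then have "gact adj (inv\<^bsub>G\<^esub> h \<otimes>\<^bsub>G\<^esub> g) b = b" by (simp add: stab_def)
    then have e3: "gact adj (inv\<^bsub>G\<^esub> h) x = b" using gact_mult[OF ih g(1) bF] g(2) by simp
    show "x = y" using gact_inv2[OF h(1) x] e3 h(2) by simp
  qed
  have img: "alpha \<omega> ` F = F"
  proof
    show "alpha \<omega> ` F \<subseteq> F"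
    proof
      fix q assume "q \<in> alpha \<omega> ` F"
      then obtain x where x: "x \<in> F" "q = alpha \<omega> x" by blast
      obtain g where g: "g \<in> carrier G" "gact adj g b = x" using orbit[OF x(1)] by blast
      show "q \<in> F" using x alpha_eval[OF w st g(1)] g gact_closed[OF g(1) wb] by simp
    qed
  next
    show "F \<subseteq> alpha \<omega> ` F"
    proof
      fix q assume q: "q \<in> F"
      obtain k where k: "k \<in> carrier G" "gact adj k b = q" using orbit[OF q] by blast
      have iw: "inv\<^bsub>G\<^esub> \<omega> \<in> carrier G" using w by simp
      define g where "g = k \<otimes>\<^bsub>G\<^esub> inv\<^bsub>G\<^esub> \<omega>"
      have g: "g \<in> carrier G" using k iw by (simp add: g_def)
      have "alpha \<omega> (gact adj g b) = gact adj g (gact adj \<omega> b)" by (rule alpha_eval[OF w st g])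
      also have "\<dots> = gact adj k (gact adj (inv\<^bsub>G\<^esub> \<omega>) (gact adj \<omega> b))"
        unfolding g_def by (rule gact_mult[OF k(1) iw wb])
      also have "\<dots> = q" using gact_inv1[OF w bF] k(2) by simp
      finally show "q \<in> alpha \<omega> ` F" using gact_closed[OF g bF] by (metis image_eqI)
    qed
  qed
  show "bij_betw (alpha \<omega>) F F" using inj img by (simp add: bij_betw_def)
qed

lemma alpha_b: "\<omega> \<in> carrier G \<Longrightarrow> stab' (gact adj \<omega> b) = S \<Longrightarrow> alpha \<omega> b = gact adj \<omega> b"
  using alpha_eval[of \<omega> "\<one>\<^bsub>G\<^esub>"] gact_one bF gact_closed
  by (metis gG group.is_monoid monoid.one_closed)

lemma Aut_stab:
  assumes a: "a \<in> carrier (Aut n F adj)" and w: "\<omega> \<in> carrier G" and ab: "a b = gact adj \<omega> b"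
  shows "stab' (gact adj \<omega> b) = S"
proof -
  have "g \<in> stab' (gact adj \<omega> b) \<longleftrightarrow> g \<in> S" if g: "g \<in> carrier G" for g
  proof -
    have "gact adj g (gact adj \<omega> b) = a (gact adj g b)" using Aut_gact[OF a g bF] ab by simp
    then have "gact adj g (gact adj \<omega> b) = gact adj \<omega> b \<longleftrightarrow> a (gact adj g b) = a b" using ab by simp
    also have "\<dots> \<longleftrightarrow> gact adj g b = b" using Aut_inj[OF a gact_closed[OF g bF] bF] by auto
    finally show ?thesis using g by (simp add: stab'_def stab_def)
  qed
  then show ?thesis unfolding set_eq_iff using S_sub by (auto simp: stab'_def)
qed

theorem part1: "\<omega> \<in> carrier G \<Longrightarrow>
  (\<exists>a\<in>carrier (Aut n F adj). a b = gact adj \<omega> b) \<longleftrightarrow> \<omega> \<in> normalizer G S"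
  using Aut_stab alpha_Aut alpha_b normalizer_iff by metis

abbreviation H where "H \<equiv> G\<lparr>carrier := normalizer G S\<rparr>"

lemma N_sub: "normalizer G S \<subseteq> carrier G" using normalizer_iff by blast

lemma subgroup_N: "subgroup (normalizer G S) G"
  by (rule group.normalizer_imp_subgroup[OF gG S_sub])

lemma group_H: "group H"
  by (rule subgroup.subgroup_is_group[OF subgroup_N gG])

lemma alpha_hom: "alpha \<in> hom H (Aut n F adj)"
proof (rule homI)
  fix \<omega> assume "\<omega> \<in> carrier H"
  then show "alpha \<omega> \<in> carrier (Aut n F adj)" using alpha_Aut normalizer_iff by simp
next
  fix \<omega> \<nu> assume "\<omega> \<in> carrier H" "\<nu> \<in> carrier H"
  then have wN: "\<omega> \<in> normalizer G S" and vN: "\<nu> \<in> normalizer G S" by auto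
  have wvN: "\<omega> \<otimes>\<^bsub>G\<^esub> \<nu> \<in> normalizer G S" using subgroup.m_closed[OF subgroup_N wN vN] .
  have w: "\<omega> \<in> carrier G" "stab' (gact adj \<omega> b) = S" using wN normalizer_iff by auto
  have v: "\<nu> \<in> carrier G" "stab' (gact adj \<nu> b) = S" using vN normalizer_iff by auto
  have wv: "\<omega> \<otimes>\<^bsub>G\<^esub> \<nu> \<in> carrier G" "stab' (gact adj (\<omega> \<otimes>\<^bsub>G\<^esub> \<nu>) b) = S"
    using wvN normalizer_iff by auto
  have "alpha (\<omega> \<otimes>\<^bsub>G\<^esub> \<nu>) = restrict (alpha \<nu> \<circ> alpha \<omega>) F"
  proof (rule ext)
    fix x
    show "alpha (\<omega> \<otimes>\<^bsub>G\<^esub> \<nu>) x = restrict (alpha \<nu> \<circ> alpha \<omega>) F x"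
    proof (cases "x \<in> F")
      case False then show ?thesis by (simp add: alpha_def)
    next
      case True
      obtain g where g: "g \<in> carrier G" "gact adj g b = x" using orbit[OF True] by blast
      have gw: "g \<otimes>\<^bsub>G\<^esub> \<omega> \<in> carrier G" using monoid.m_closed[OF group.is_monoid[OF gG] g(1) w(1)] .
      have vb: "gact adj \<nu> b \<in> F" using gact_closed[OF v(1) bF] .
      have "alpha (\<omega> \<otimes>\<^bsub>G\<^esub> \<nu>) x = gact adj g (gact adj (\<omega> \<otimes>\<^bsub>G\<^esub> \<nu>) b)"
        using alpha_eval[OF wv g(1)] g(2) by simp
      also have "\<dots> = gact adj g (gact adj \<omega> (gact adj \<nu> b))" using gact_mult[OF w(1) v(1) bF] by simp
      also have "\<dots> = gact adj (g \<otimes>\<^bsub>G\<^esub> \<omega>) (gact adj \<nu> b)" using gact_mult[OF g(1) w(1) vb] by simp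
      also have "\<dots> = alpha \<nu> (gact adj (g \<otimes>\<^bsub>G\<^esub> \<omega>) b)" using alpha_eval[OF v gw] by simp
      also have "gact adj (g \<otimes>\<^bsub>G\<^esub> \<omega>) b = gact adj g (gact adj \<omega> b)" using gact_mult[OF g(1) w(1) bF] .
      also have "\<dots> = alpha \<omega> x" using alpha_eval[OF w g(1)] g(2) by simp
      finally show ?thesis using True by simp
    qed
  qed
  then show "alpha (\<omega> \<otimes>\<^bsub>H\<^esub> \<nu>) = alpha \<omega> \<otimes>\<^bsub>Aut n F adj\<^esub> alpha \<nu>"
    by (simp add: Aut_mult)
qed

lemma alpha_onto: "alpha ` carrier H = carrier (Aut n F adj)"
proof
  show "alpha ` carrier H \<subseteq> carrier (Aut n F adj)" using alpha_hom by (auto simp: hom_def)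
next
  show "carrier (Aut n F adj) \<subseteq> alpha ` carrier H"
  proof
    fix a assume a: "a \<in> carrier (Aut n F adj)"
    obtain \<omega> where w: "\<omega> \<in> carrier G" "gact adj \<omega> b = a b" using orbit[OF Aut_closed[OF a bF]] by blast
    have st: "stab' (gact adj \<omega> b) = S" using Aut_stab[OF a w(1) w(2)[symmetric]] .
    have wN: "\<omega> \<in> normalizer G S" using normalizer_iff w st by simp
    have "a = alpha \<omega>"
    proof (rule ext)
      fix x show "a x = alpha \<omega> x"
      proof (cases "x \<in> F")
        case False then show ?thesis using AutD(2)[OF a] by (simp add: alpha_def extensional_def)
      next
        case True
        obtain g where g: "g \<in> carrier G" "gact adj g b = x" using orbit[OF True] by blast
        have "a x = gact adj g (a b)" using Aut_gact[OF a g(1) bF] g(2) by simp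
        also have "\<dots> = alpha \<omega> x" using alpha_eval[OF w(1) st g(1)] g(2) w(2) by simp
        finally show ?thesis .
      qed
    qed
    then show "a \<in> alpha ` carrier H" using wN by simp
  qed
qed

lemma alpha_kernel: "kernel H (Aut n F adj) alpha = S"
proof
  show "kernel H (Aut n F adj) alpha \<subseteq> S"
  proof
    fix \<omega> assume "\<omega> \<in> kernel H (Aut n F adj) alpha"
    then have wN: "\<omega> \<in> normalizer G S" and e: "alpha \<omega> = restrict id F" by (auto simp: kernel_def Aut_one)
    have w: "\<omega> \<in> carrier G" "stab' (gact adj \<omega> b) = S" using wN normalizer_iff by auto
    have "gact adj \<omega> b = b" using alpha_b[OF w] e bF by simp
    then show "\<omega> \<in> S" using w(1) by (simp add: stab_def)
  qed
next
  show "S \<subseteq> kernel H (Aut n F adj) alpha"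
  proof
    fix \<omega> assume s: "\<omega> \<in> S"
    then have w: "\<omega> \<in> carrier G" "gact adj \<omega> b = b" by (auto simp: stab_def)
    then have st: "stab' (gact adj \<omega> b) = S" by (simp add: S_stab')
    then have wN: "\<omega> \<in> normalizer G S" using w normalizer_iff by simp
    have "alpha \<omega> = restrict id F"
    proof (rule ext)
      fix x show "alpha \<omega> x = restrict id F x"
      proof (cases "x \<in> F")
        case False then show ?thesis by (simp add: alpha_def)
      next
        case True
        obtain g where g: "g \<in> carrier G" "gact adj g b = x" using orbit[OF True] by blast
        show ?thesis using alpha_eval[OF w(1) st g(1)] g w(2) True by simp
      qed
    qed
    then show "\<omega> \<in> kernel H (Aut n F adj) alpha" using wN by (simp add: kernel_def Aut_one)
  qed
qed

theorem part2: "Aut n F adj \<cong> (H Mod S)"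
proof -
  interpret gh: group_hom H "Aut n F adj" alpha
    by (intro group_hom.intro group_hom_axioms.intro group_H group_Aut alpha_hom)
  have "(H Mod kernel H (Aut n F adj) alpha) \<cong> Aut n F adj" by (rule gh.FactGroup_iso[OF alpha_onto])
  then have i: "(H Mod S) \<cong> Aut n F adj" by (simp add: alpha_kernel)
  have "normal S H" by (rule group.subgroup_in_normalizer[OF gG subgroup_S])
  then have "group (H Mod S)" by (rule normal.factorgroup_is_group)
  then show ?thesis using i by (rule group.iso_sym)
qed

end


lemma eta_one:
  assumes vo: "voltage_operator n m Y adjY eta" and y: "y \<in> Y"
  shows "eta y \<one>\<^bsub>Cox m\<^esub> = \<one>\<^bsub>Cox n\<^esub>"
proof -
  interpret PY: pmx m Y adjY using vo by (simp add: voltage_operator_def pmx_def)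
  interpret Gm: group "Cox m" by (rule group_Cox)
  interpret Gn: group "Cox n" by (rule group_Cox)
  have ec: "eta y \<one>\<^bsub>Cox m\<^esub> \<in> carrier (Cox n)" using vo y by (simp add: voltage_operator_def)
  have "eta y (\<one>\<^bsub>Cox m\<^esub> \<otimes>\<^bsub>Cox m\<^esub> \<one>\<^bsub>Cox m\<^esub>) = eta (gact adjY \<one>\<^bsub>Cox m\<^esub> y) \<one>\<^bsub>Cox m\<^esub> \<otimes>\<^bsub>Cox n\<^esub> eta y \<one>\<^bsub>Cox m\<^esub>"
    using vo y unfolding voltage_operator_def by blast
  then have "eta y \<one>\<^bsub>Cox m\<^esub> \<otimes>\<^bsub>Cox n\<^esub> eta y \<one>\<^bsub>Cox m\<^esub> = \<one>\<^bsub>Cox n\<^esub> \<otimes>\<^bsub>Cox n\<^esub> eta y \<one>\<^bsub>Cox m\<^esub>"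
    using PY.gact_one[OF y] ec by simp
  then show ?thesis using Gn.right_cancel[OF ec ec] by simp
qed

locale mixctx =
  fixes X :: "'a set" and adjX :: "nat \<Rightarrow> 'a \<Rightarrow> 'a"
    and Y :: "'b set" and adjY :: "nat \<Rightarrow> 'b \<Rightarrow> 'b"
    and eta :: "'b \<Rightarrow> nat list set \<Rightarrow> nat list set" and n m :: nat
  assumes pX: "premaniplex n X adjX" and vo: "voltage_operator n m Y adjY eta"
begin

abbreviation M where "M \<equiv> mix_adj adjX m eta adjY"

sublocale PX: pmx n X adjX by (rule pmx.intro[OF pX])
sublocale PY: pmx m Y adjY using vo by (simp add: voltage_operator_def pmx_def)

lemma eta_carrier: "y \<in> Y \<Longrightarrow> g \<in> carrier (Cox m) \<Longrightarrow> eta y g \<in> carrier (Cox n)"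
  using vo by (simp add: voltage_operator_def)

lemma eta_mult: "y \<in> Y \<Longrightarrow> g1 \<in> carrier (Cox m) \<Longrightarrow> g2 \<in> carrier (Cox m) \<Longrightarrow>
  eta y (g2 \<otimes>\<^bsub>Cox m\<^esub> g1) = eta (gact adjY g1 y) g2 \<otimes>\<^bsub>Cox n\<^esub> eta y g1"
  using vo unfolding voltage_operator_def by blast

lemma mix_act: "w \<in> lists {..<m} \<Longrightarrow> x \<in> X \<Longrightarrow> y \<in> Y \<Longrightarrow>
  act M w (x, y) = (gact adjX (eta y (cls m w)) x, act adjY w y)"
proof (induction w)
  case Nil
  then show ?case using eta_one[OF vo Nil(3)] PX.gact_one[OF Nil(2)] by (simp add: one_Cox[symmetric])
next
  case (Cons i w)
  have w: "w \<in> lists {..<m}" and i: "i < m" using Cons.prems by auto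
  have cw: "cls m w \<in> carrier (Cox m)" using cls_in_carrier[OF w] .
  have gi: "gen m i \<in> carrier (Cox m)" using PY.gen_carrier[OF i] .
  define y' where "y' = act adjY w y"
  have y': "y' \<in> Y" using PY.act_closed[OF w Cons.prems(3)] by (simp add: y'_def)
  have gy: "gact adjY (cls m w) y = y'" using PY.gact_cls[OF w Cons.prems(3)] by (simp add: y'_def)
  have ci: "cls m (i # w) = gen m i \<otimes>\<^bsub>Cox m\<^esub> cls m w"
    using mult_cls[of "[i]" m w] i w by (simp add: gen_def)
  have e: "eta y (cls m (i # w)) = eta y' (gen m i) \<otimes>\<^bsub>Cox n\<^esub> eta y (cls m w)"
    using eta_mult[OF Cons.prems(3) cw gi] gy ci by simp
  have "act M (i # w) (x, y) = M i (gact adjX (eta y (cls m w)) x, y')"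
    using Cons.IH[OF w Cons.prems(2,3)] by (simp add: y'_def)
  also have "\<dots> = (gact adjX (eta y' (gen m i)) (gact adjX (eta y (cls m w)) x), adjY i y')"
    by (simp add: mix_adj_def)
  also have "gact adjX (eta y' (gen m i)) (gact adjX (eta y (cls m w)) x) = gact adjX (eta y (cls m (i # w))) x"
    using PX.gact_mult[OF eta_carrier[OF y' gi] eta_carrier[OF Cons.prems(3) cw] Cons.prems(2)] e by simp
  finally show ?case by (simp add: y'_def)
qed

lemma mix_coxeq: "coxeq m u v \<Longrightarrow> p \<in> X \<times> Y \<Longrightarrow> act M u p = act M v p"
proof -
  assume c: "coxeq m u v" and p: "p \<in> X \<times> Y"
  obtain x y where xy: "p = (x, y)" "x \<in> X" "y \<in> Y" using p by auto
  have u: "u \<in> lists {..<m}" and v: "v \<in> lists {..<m}" using coxeq_lists[OF c] by auto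
  show ?thesis using mix_act[OF u xy(2,3)] mix_act[OF v xy(2,3)] cls_eqI[OF c] PY.act_coxeq[OF c xy(3)] xy(1)
    by simp
qed

lemma mix_closed: "w \<in> lists {..<m} \<Longrightarrow> p \<in> X \<times> Y \<Longrightarrow> act M w p \<in> X \<times> Y"
proof -
  assume w: "w \<in> lists {..<m}" and p: "p \<in> X \<times> Y"
  obtain x y where xy: "p = (x, y)" "x \<in> X" "y \<in> Y" using p by auto
  show ?thesis using mix_act[OF w xy(2,3)] xy PX.gact_closed[OF eta_carrier[OF xy(3) cls_in_carrier[OF w]] xy(2)]
     PY.act_closed[OF w xy(3)] by simp
qed

lemma pm_mix: "premaniplex m (X \<times> Y) M"
  unfolding premaniplex_def
proof (intro conjI allI impI ballI)
  fix i p assume i: "i < m" and p: "p \<in> X \<times> Y"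
  show "M i p \<in> X \<times> Y" using mix_closed[of "[i]" p] i p by simp
  show "M i (M i p) = p" using mix_coxeq[OF coxeq.invol[OF i] p] by simp
next
  fix i j p assume i: "i < m" and j: "j < m" and ij: "i + 2 \<le> j \<or> j + 2 \<le> i" and p: "p \<in> X \<times> Y"
  show "M i (M j (M i (M j p))) = p" using mix_coxeq[OF coxeq.comm[OF i j ij] p] by simp
qed

lemma stab_mix: "x0 \<in> X \<Longrightarrow> y0 \<in> Y \<Longrightarrow> stab m M (x0, y0) = zeta_preimage n m adjX x0 adjY y0 eta"
proof -
  assume x0: "x0 \<in> X" and y0: "y0 \<in> Y"
  have "gact M g (x0, y0) = (gact adjX (eta y0 g) x0, gact adjY g y0)" if g: "g \<in> carrier (Cox m)" for g
    using mix_act[OF repr_in_carrier(1)[OF g] x0 y0] repr_in_carrier(2)[OF g] by (simp add: gact_def)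
  then show ?thesis using eta_carrier[OF y0]
    by (auto simp: stab_def zeta_preimage_def)
qed

end

theorem corollary5p3:
  fixes X :: "'a set" and adjX :: "nat \<Rightarrow> 'a \<Rightarrow> 'a" and x0 :: 'a
    and Y :: "'b set" and adjY :: "nat \<Rightarrow> 'b \<Rightarrow> 'b" and y0 :: 'b
    and eta :: "'b \<Rightarrow> nat list set \<Rightarrow> nat list set" and n m :: nat
  assumes "premaniplex n X adjX" and "connected_pm n X adjX" and "x0 \<in> X"
    and "voltage_operator n m Y adjY eta" and "connected_pm m Y adjY" and "y0 \<in> Y"
    and "connected_pm m (X \<times> Y) (mix_adj adjX m eta adjY)"
  shows "(\<forall>\<omega>\<in>carrier (Cox m).
            (\<exists>\<alpha>\<in>carrier (Aut m (X \<times> Y) (mix_adj adjX m eta adjY)).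
               \<alpha> (x0, y0) = gact (mix_adj adjX m eta adjY) \<omega> (x0, y0))
            \<longleftrightarrow> \<omega> \<in> normalizer (Cox m) (zeta_preimage n m adjX x0 adjY y0 eta))
         \<and> Aut m (X \<times> Y) (mix_adj adjX m eta adjY) \<cong>
             ((Cox m)\<lparr>carrier := normalizer (Cox m) (zeta_preimage n m adjX x0 adjY y0 eta)\<rparr>
               Mod (zeta_preimage n m adjX x0 adjY y0 eta))"
proof -
  interpret mixctx X adjX Y adjY eta n m using assms(1,4) by (rule mixctx.intro)
  interpret C: cpmx m "X \<times> Y" M "(x0, y0)"
    using pm_mix assms(3,6,7) by (intro cpmx.intro cpmx_axioms.intro pmx.intro) auto
  have st: "stab m M (x0, y0) = zeta_preimage n m adjX x0 adjY y0 eta"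
    by (rule stab_mix[OF assms(3,6)])
  show ?thesis unfolding st[symmetric] using C.part1 C.part2 by blast
qed

end
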